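(* Let $q$ be a power of the prime $p$, $n$ a positive integer, $a\in\mathbb{F}_q$ with $a^n=1$, and $\delta\in\mathbb{F}_{q^n}$ nonzero with $\delta^q=a\delta$. Let $L_{g_a}(x)=x^{q^{n-1}}+a x^{q^{n-2}}+\cdots+a^{n-1}x$ (the linearized $q$-associate of $g_a(x)=\frac{x^n-1}{x-a}$). Let $f(x)=\sum_{i=0}^m a_i x^i\in\mathbb{F}_{q^n}[x]$, $h\in\mathbb{F}_q[x]$, and $k\in\mathbb{F}_{q^n}[x]$ with $k(\delta\mathbb{F}_q)\subseteq\mathbb{F}_q^*$, and let $P(x)=f(L_{g_a}(x))+k(L_{g_a}(x))\cdot L_h(x)$. Then $P$ is a permutation polynomial of $\mathbb{F}_{q^n}$ if and only if: (1) $\gcd\left(h(x),\frac{x^n-1}{x-a}\right)=1$; and (2) $\bar{Q}_a(x)=\frac{1}{a}\sum_{i=0}^m\mathrm{Tr}_{q^n/q}(\delta^{i-1}a_i)x^i+k(\delta x)h(a)x$ induces a permutation of $\mathbb{F}_q$. Moreover, in this case, if $R$ induces the inverse permutation of $\bar{Q}_a$ on $\mathbb{F}_q$, then the inverse of the permutation of $\mathbb{F}_{q^n}$ induced by $P$ is induced by $$P_0(x)=F(\delta^{-1}L_{g_a}(x))+k(\delta R(\delta^{-1}L_{g_a}(x)))^{q-2}\cdot L_H(x),$$ where $H\in\mathbb{F}_q[x]$ and $F\in\mathbb{F}_{q^n}[x]$ are as follows: (i) if $p\mid n$: $H$ is the unique polynomial of degree at most $n-1$ with $h(x)H(x)\equiv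 1\pmod{x^n-1}$ (such $H$ exists, since when $p\mid n$ condition (1) is equivalent to $\gcd(h(x),x^n-1)=1$), and $F$ is any polynomial with $F(x)\equiv -k(\delta R(x))^{q-2}\cdot L_H(f(\delta R(x)))\pmod{x^q-x}$; (ii) if $p\nmid n$: $H$ is the unique polynomial of degree at most $n-2$ with $h(x)H(x)\equiv 1\pmod{\frac{x^n-1}{x-a}}$, and $F$ is any polynomial with $F(x)\equiv M(\delta R(x))\pmod{x^q-x}$, where $M(x)=-k(x)^{q-2}\cdot L_H(f(x))+a x\cdot\frac{1-h(a)H(a)}{n}$.
   Context: For $u(x)=\sum_{i=0}^m c_i x^i\in\mathbb{F}_q[x]$, its linearized $q$-associate is $L_u(x)=\sum_{i=0}^m c_i x^{q^i}$. $\mathrm{Tr}_{q^n/q}(x)=x+x^q+\cdots+x^{q^{n-1}}$. A permutation polynomial of a finite field is a polynomial inducing a bijection of it. *)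

theory Defs
  imports "HOL-Computational_Algebra.Polynomial_Factorial" "HOL-Library.Cardinality"
begin

definition subfq :: "nat \<Rightarrow> 'a::field set" where
  "subfq q = {x. x ^ q = x}"

definition linq :: "nat \<Rightarrow> 'a::field poly \<Rightarrow> 'a poly" where
  "linq q u = (\<Sum>i\<le>degree u. monom (coeff u i) (q ^ i))"

definition trq :: "nat \<Rightarrow> nat \<Rightarrow> 'a::field \<Rightarrow> 'a" where
  "trq q n x = (\<Sum>j<n. x ^ (q ^ j))"

definition ga :: "nat \<Rightarrow> 'a::field \<Rightarrow> 'a poly" where
  "ga n a = (monom 1 n - 1) div [:-a, 1:]"

definition pcong :: "'a::field poly \<Rightarrow> 'a poly \<Rightarrow> 'a poly \<Rightarrow> bool" where
  "pcong A B m \<longleftrightarrow> m dvd (A - B)"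

definition Qbar :: "nat \<Rightarrow> nat \<Rightarrow> 'a::field \<Rightarrow> 'a \<Rightarrow> 'a poly \<Rightarrow> 'a poly \<Rightarrow> 'a poly \<Rightarrow> 'a \<Rightarrow> 'a" where
  "Qbar q n a \<delta> f h k x =
     (1 / a) * (\<Sum>i\<le>degree f. trq q n (\<delta> powi (int i - 1) * coeff f i) * x ^ i)
     + poly k (\<delta> * x) * poly h a * x"

end

theory Submission
  imports Defs
begin


lemma linq_sum:
  fixes u :: "'a::field poly"
  assumes "degree u \<le> N"
  shows "poly (linq q u) x = (\<Sum>i\<le>N. coeff u i * x ^ (q ^ i))"
proof -
  have "poly (linq q u) x = (\<Sum>i\<le>degree u. coeff u i * x ^ (q ^ i))"
    by (simp add: linq_def poly_sum poly_monom)
  also have "\<dots> = (\<Sum>i\<le>N. coeff u i * x ^ (q ^ i))"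
    by (rule sum.mono_neutral_left) (use assms in \<open>auto simp: coeff_eq_0\<close>)
  finally show ?thesis .
qed

lemma linq_pCons:
  fixes u :: "'a::field poly"
  shows "poly (linq q (pCons c u)) y = c * y + poly (linq q u) (y ^ q)"
proof -
  have "poly (linq q (pCons c u)) y = (\<Sum>i\<le>Suc (degree u). coeff (pCons c u) i * y ^ (q ^ i))"
    by (rule linq_sum) (simp add: degree_pCons_le)
  also have "\<dots> = c * y + (\<Sum>i\<le>degree u. coeff u i * y ^ (q ^ Suc i))"
    by (subst sum.atMost_Suc_shift) simp
  also have "(\<Sum>i\<le>degree u. coeff u i * y ^ (q ^ Suc i)) = poly (linq q u) (y ^ q)"
    by (subst linq_sum[of u "degree u"]) (simp_all add: power_mult)
  finally show ?thesis .
qed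

lemma linq_0 [simp]: "poly (linq q (0::'a::field poly)) y = 0"
  by (simp add: linq_def)

lemma linq_add:
  fixes u v :: "'a::field poly"
  shows "poly (linq q (u + v)) y = poly (linq q u) y + poly (linq q v) y"
proof -
  let ?N = "max (degree u) (degree v)"
  have "degree (u + v) \<le> ?N" by (rule degree_add_le_max)
  then show ?thesis
    by (simp add: linq_sum[of _ ?N] sum.distrib distrib_right)
qed

lemma linq_smult:
  fixes u :: "'a::field poly"
  shows "poly (linq q (smult c u)) y = c * poly (linq q u) y"
  by (simp add: linq_sum[of _ "degree u"] sum_distrib_left mult.assoc)

lemma linq_minus:
  fixes u :: "'a::field poly"
  shows "poly (linq q (- u)) y = - poly (linq q u) y"
  using linq_smult[of q "-1" u y] by simp

lemma linq_diff:
  fixes u v :: "'a::field poly"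
  shows "poly (linq q (u - v)) y = poly (linq q u) y - poly (linq q v) y"
  using linq_add[of q u "-v" y] linq_minus[of q v y] by simp

lemma linq_1: "poly (linq q (1::'a::field poly)) y = y"
  by (simp add: linq_def poly_monom)

lemma linq_monom1: "poly (linq q (monom (1::'a::field) n)) y = y ^ (q ^ n)"
proof -
  have "poly (linq q (monom (1::'a::field) n)) y = (\<Sum>i\<le>n. (if n = i then 1 else 0) * y ^ (q ^ i))"
    by (subst linq_sum[of _ n]) (simp_all add: coeff_monom degree_monom_le)
  also have "\<dots> = (\<Sum>i\<le>n. if i = n then y ^ (q ^ i) else 0)" by (rule sum.cong) auto
  also have "\<dots> = y ^ (q ^ n)" by simp
  finally show ?thesis .
qed

context
  fixes q :: nat
  assumes qpos: "q > 0"
  and frob: "\<And>x y::'a::field. (x + y) ^ q = x ^ q + y ^ q"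
begin

lemma frob_neg: "(- x :: 'a) ^ q = - (x ^ q)"
proof -
  have "(x + - x) ^ q = x ^ q + (- x) ^ q" by (rule frob)
  then show ?thesis using qpos by (simp add: eq_neg_iff_add_eq_0 add.commute power_0_left)
qed

lemma frob_diff: "(x - y :: 'a) ^ q = x ^ q - y ^ q"
  using frob[of x "-y"] frob_neg[of y] by simp

lemma linq_x0: "poly (linq q (u::'a poly)) 0 = 0"
  by (induction u rule: pCons_induct) (use qpos in \<open>simp_all add: linq_pCons power_0_left\<close>)

lemma linq_addx: "poly (linq q (u::'a poly)) (x + y) = poly (linq q u) x + poly (linq q u) y"
  by (induction u arbitrary: x y rule: pCons_induct)
     (simp_all add: linq_pCons frob algebra_simps)

lemma linq_negx: "poly (linq q (u::'a poly)) (- x) = - poly (linq q u) x"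
  using linq_addx[of u x "-x"] by (simp add: linq_x0 eq_neg_iff_add_eq_0 add.commute)

lemma linq_diffx: "poly (linq q (u::'a poly)) (x - y) = poly (linq q u) x - poly (linq q u) y"
  using linq_addx[of u x "-y"] linq_negx[of u y] by simp

lemma linq_scalx:
  assumes "c ^ q = (c::'a)"
  shows "poly (linq q (u::'a poly)) (c * x) = c * poly (linq q u) x"
proof (induction u arbitrary: x rule: pCons_induct)
  case (pCons d u)
  have "poly (linq q (pCons d u)) (c * x) = d * (c * x) + poly (linq q u) (c * x ^ q)"
    by (simp add: linq_pCons power_mult_distrib assms)
  also have "\<dots> = c * poly (linq q (pCons d u)) x"
    by (simp add: pCons.IH linq_pCons algebra_simps)
  finally show ?case .
qed simp

lemma linq_frob:
  assumes "\<forall>i. coeff u i ^ q = (coeff u i :: 'a)"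
  shows "(poly (linq q u) y) ^ q = poly (linq q u) (y ^ q)"
  using assms
proof (induction u arbitrary: y rule: pCons_induct)
  case 0 then show ?case using qpos by simp
next
  case (pCons c u)
  have c: "c ^ q = c" using pCons.prems[rule_format, of 0] by simp
  have u: "\<forall>i. coeff u i ^ q = coeff u i" using pCons.prems[rule_format, of "Suc i" for i] by simp
  show ?case using pCons.IH[OF u] c by (simp add: linq_pCons frob power_mult_distrib)
qed

lemma linq_mult:
  assumes "\<forall>i. coeff v i ^ q = (coeff v i :: 'a)"
  shows "poly (linq q (u * v)) y = poly (linq q u) (poly (linq q v) y)"
proof (induction u arbitrary: y rule: pCons_induct)
  case 0 then show ?case by simp
next
  case (pCons c u)
  show ?case
    by (simp add: mult_pCons_left linq_add linq_smult linq_pCons pCons.IH linq_frob[OF assms])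
qed

lemma linq_eig:
  assumes "a ^ q = (a::'a)" "y ^ q = a * y"
  shows "poly (linq q u) y = poly u a * y"
  by (induction u rule: pCons_induct)
     (simp_all add: linq_pCons assms linq_scalx algebra_simps)

end



lemma ff_power_card: "(x::'a::{field,finite}) ^ card (UNIV :: 'a set) = x"
proof (cases "x = 0")
  case False
  have "x * (\<Prod>y\<in>UNIV-{0}. x * y) = x * x ^ (card (UNIV :: 'a set) - 1) * \<Prod>(UNIV-{0})"
    by (simp add: prod.distrib mult_ac)
  also have "x * x ^ (card (UNIV :: 'a set) - 1) = x ^ Suc (card (UNIV :: 'a set) - 1)"
    by (subst power_Suc) auto
  also have "Suc (card (UNIV :: 'a set) - 1) = card (UNIV :: 'a set)"
    using finite_UNIV_card_ge_0[where ?'a = 'a] by simp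
  also have "(\<Prod>y\<in>UNIV-{0}. x * y) = (\<Prod>y\<in>UNIV-{0}. y)"
    by (rule prod.reindex_bij_witness[of _ "\<lambda>y. y / x" "\<lambda>y. x * y"]) (use False in auto)
  finally show ?thesis
    by simp
qed (use finite_UNIV_card_ge_0[where ?'a = 'a] in auto)

lemma ff_of_nat_card: "(of_nat (card (UNIV :: 'a set)) :: 'a::{field,finite}) = 0"
proof -
  have "(\<Sum>x\<in>(UNIV::'a set). x + 1) = (\<Sum>x\<in>UNIV. x)"
    by (rule sum.reindex_bij_witness[of _ "\<lambda>y. y - 1" "\<lambda>y. y + 1"]) auto
  then show ?thesis by (simp add: sum.distrib)
qed

lemma ff_CHAR:
  assumes "prime p" "CARD('a::{field,finite}) = p ^ m" "m > 0"
  shows "CHAR('a) = p"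
proof -
  have pc: "prime CHAR('a)"
    using prime_CHAR_semidom[where ?'a = 'a] finite_imp_CHAR_pos[where ?'a='a] by simp
  have "of_nat (p ^ m) = (0::'a)"
    using ff_of_nat_card[where ?'a='a] assms(2) by simp
  then have "CHAR('a) dvd p ^ m"
    using of_nat_eq_0_iff_char_dvd by blast
  then have "CHAR('a) dvd p" using pc prime_dvd_power by blast
  then show ?thesis using pc assms(1) primes_dvd_imp_eq by blast
qed

lemma ff_frob:
  assumes "CHAR('a::{field,finite}) = p" "prime p" "q = p ^ e"
  shows "(x + y :: 'a) ^ q = x ^ q + y ^ q"
  using freshmans_dream'[of q e x y] assms by simp

lemma linq_coeff_top:
  fixes u :: "'a::field poly"
  assumes "q > 1"
  shows "coeff (linq q u) (q ^ degree u) = lead_coeff u"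
proof -
  have "coeff (linq q u) (q ^ degree u) = (\<Sum>i\<le>degree u. if i = degree u then coeff u i else 0)"
    unfolding linq_def coeff_sum coeff_monom
    by (rule sum.cong) (use assms power_inject_exp in auto)
  then show ?thesis by simp
qed

lemma linq_degree:
  fixes u :: "'a::field poly"
  assumes "q > 1"
  shows "degree (linq q u) \<le> q ^ degree u"
  unfolding linq_def
  by (rule degree_sum_le) (use assms in \<open>auto intro: order.trans[OF degree_monom_le] power_increasing\<close>)

lemma linq_nz:
  fixes u :: "'a::field poly"
  assumes "q > 1" "u \<noteq> 0"
  shows "linq q u \<noteq> 0"
  using linq_coeff_top[OF assms(1), of u] assms(2) by auto

lemma linq_roots:
  fixes u :: "'a::{field} poly"
  assumes "q > 1" "u \<noteq> 0"
  shows "card {x. poly (linq q u) x = 0} \<le> q ^ degree u"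
  using card_poly_roots_bound[OF linq_nz[OF assms]] linq_degree[OF assms(1), of u] by linarith

lemma subfq_card:
  assumes "q > 1"
  shows "card (subfq q :: 'a::field set) \<le> q"
proof -
  let ?P = "monom (1::'a) q - [:0, 1:]"
  have c0: "coeff [:0,1::'a:] q = 0" using assms by (cases q) (auto simp: coeff_pCons split: nat.split)
  have c: "coeff ?P q = 1" by (simp only: coeff_diff coeff_monom c0) simp
  have nz: "?P \<noteq> 0"
  proof
    assume "?P = 0"
    then have "coeff ?P q = 0" by (simp only: coeff_0)
    with c show False by simp
  qed
  have "degree ?P \<le> q"
    using assms by (intro degree_diff_le) (auto simp: degree_monom_le)
  moreover have "subfq q = {x. poly ?P x = 0}" by (auto simp: subfq_def poly_monom)
  ultimately show ?thesis using card_poly_roots_bound[OF nz] by (metis le_trans)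
qed

fun gp :: "'a::field \<Rightarrow> nat \<Rightarrow> 'a poly" where
  "gp a 0 = 0"
| "gp a (Suc n) = monom 1 n + smult a (gp a n)"

lemma gp_mult: "[:-a, 1:] * gp a n = monom 1 n - [:a ^ n:]"
proof (induction n)
  case 0 then show ?case by (simp add: monom_0)
next
  case (Suc n)
  have xm: "[:-a, 1:] * monom 1 n = monom 1 (Suc n) - smult a (monom 1 n)"
    by (simp add: monom_Suc mult_pCons_left mult_monom)
  have "[:-a, 1:] * gp a (Suc n) = [:-a, 1:] * monom 1 n + smult a ([:-a, 1:] * gp a n)"
    by (simp only: gp.simps distrib_left mult_smult_right)
  also have "\<dots> = monom 1 (Suc n) - smult a (monom 1 n) + smult a (monom 1 n - [:a ^ n:])"
    by (simp only: Suc.IH xm)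
  also have "\<dots> = monom 1 (Suc n) - [:a ^ Suc n:]"
    by (simp add: smult_diff_right)
  finally show ?case .
qed

lemma gp_coeff: "coeff (gp a n) i = (if i < n then a ^ (n - 1 - i) else 0)"
proof (induction n)
  case (Suc n)
  show ?case
  proof (cases "i < n")
    case True
    then have "a * a ^ (n - Suc i) = a ^ (n - i)"
      by (metis Suc_diff_Suc power_Suc)
    then show ?thesis using Suc True by (simp add: coeff_monom)
  qed (use Suc in \<open>auto simp: coeff_monom\<close>)
qed simp

lemma gp_poly: "poly (gp a n) a = of_nat n * a ^ (n - 1)"
proof (induction n)
  case (Suc n)
  then show ?case
    by (cases n) (simp_all add: poly_monom algebra_simps)
qed simp

lemma gp_degree: "n > 0 \<Longrightarrow> degree (gp a n) = n - 1"
proof -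
  assume n: "n > 0"
  have "degree (gp a n) \<le> n - 1"
    by (rule degree_le) (auto simp: gp_coeff)
  moreover have "coeff (gp a n) (n - 1) \<noteq> 0" using n by (simp add: gp_coeff)
  then have "n - 1 \<le> degree (gp a n)" by (rule le_degree)
  ultimately show ?thesis by simp
qed

lemma ga_gp:
  assumes "a ^ n = (1::'a::field)"
  shows "ga n a = gp a n"
proof -
  have "monom 1 n - 1 = [:-a, 1:] * gp a n" using assms gp_mult[of a n]
    by (simp del: mult_pCons_left add: one_pCons)
  then show ?thesis unfolding ga_def by (metis nonzero_mult_div_cancel_left pCons_eq_0_iff zero_neq_one)
qed



definition sig :: "nat \<Rightarrow> 'a::field poly \<Rightarrow> 'a poly" where
  "sig q u = map_poly (\<lambda>c. c ^ q) u"

context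
  fixes q :: nat
  assumes qpos: "q > 0"
  and frob: "\<And>x y::'a::field. (x + y) ^ q = x ^ q + y ^ q"
begin

lemma sig_coeff: "coeff (sig q u) i = (coeff u i :: 'a) ^ q"
  unfolding sig_def using qpos by (simp add: coeff_map_poly power_0_left)

lemma sig_add: "sig q (u + v) = sig q u + (sig q v :: 'a poly)"
  by (rule poly_eqI) (simp add: sig_coeff frob)

lemma sig_smult: "sig q (smult c u) = smult (c ^ q) (sig q u :: 'a poly)"
  by (rule poly_eqI) (simp add: sig_coeff power_mult_distrib)

lemma sig_pCons: "sig q (pCons c u) = pCons (c ^ q) (sig q u :: 'a poly)"
  by (rule poly_eqI) (simp add: sig_coeff coeff_pCons qpos power_0_left split: nat.split)

lemma sig_0: "sig q 0 = (0::'a poly)"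
  by (rule poly_eqI) (simp add: sig_coeff qpos power_0_left)

lemma sig_1: "sig q 1 = (1::'a poly)"
  using qpos by (intro poly_eqI) (simp add: sig_coeff coeff_1 power_0_left)

lemma sig_mult: "sig q (u * v) = sig q u * (sig q v :: 'a poly)"
proof (induction u rule: pCons_induct)
  case 0 then show ?case by (simp add: sig_0)
next
  case (pCons c u)
  then show ?case using qpos by (simp add: sig_add sig_smult sig_pCons sig_0)
qed

lemma sig_minus: "sig q (- u) = - (sig q u :: 'a poly)"
  by (rule poly_eqI) (simp add: sig_coeff frob_neg[OF qpos frob])

lemma sig_diff: "sig q (u - v) = sig q u - (sig q v :: 'a poly)"
  by (rule poly_eqI) (simp add: sig_coeff frob_diff[OF qpos frob])

lemma sig_degree: "degree (sig q u) = degree (u :: 'a poly)"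
  unfolding sig_def by (rule degree_map_poly) simp

lemma sig_id_iff: "sig q u = u \<longleftrightarrow> (\<forall>i. coeff (u::'a poly) i ^ q = coeff u i)"
  by (auto simp: poly_eq_iff sig_coeff)

lemma sig_dvd: "u dvd v \<Longrightarrow> sig q u dvd (sig q v :: 'a poly)"
  by (auto simp: sig_mult elim!: dvdE)

end



lemma linq_sumx:
  fixes u :: "'a::field poly"
  assumes "\<And>x y. poly (linq q u) (x + y) = poly (linq q u) x + poly (linq q u) y"
    and "poly (linq q u) 0 = 0"
  shows "poly (linq q u) (\<Sum>i\<in>A. g i) = (\<Sum>i\<in>A. poly (linq q u) (g i))"
  by (induction A rule: infinite_finite_induct) (simp_all add: assms)

lemma powi_shift: "(d::'a::field) \<noteq> 0 \<Longrightarrow> d * d powi (int i - 1) = d ^ i"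
  by (cases i) (simp_all add: power_int_def)

context
  fixes q n :: nat and a \<delta> :: "'a::{field_gcd,finite}"
  assumes q1: "q > 1"
  and frob: "\<And>x y::'a. (x + y) ^ q = x ^ q + y ^ q"
  and cardV: "CARD('a) = q ^ n"
  and n0: "n > 0"
  and aq: "a ^ q = a" and an: "a ^ n = 1" and dnz: "\<delta> \<noteq> 0" and dq: "\<delta> ^ q = a * \<delta>"
  fixes f h k :: "'a poly"
  assumes hF: "\<forall>i. coeff h i \<in> subfq q"
  and kF: "\<forall>x\<in>subfq q. poly k (\<delta> * x) \<in> subfq q - {0}"
begin

lemma qpos: "q > 0" using q1 by simp

lemmas L_addx = linq_addx[OF qpos frob]
lemmas L_negx = linq_negx[OF qpos frob]
lemmas L_diffx = linq_diffx[OF qpos frob]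
lemmas L_x0 = linq_x0[OF qpos frob]
lemmas L_scalx = linq_scalx[OF qpos frob]
lemmas L_frob = linq_frob[OF qpos frob]
lemmas L_mult = linq_mult[OF qpos frob]
lemmas L_eig = linq_eig[OF qpos frob]

lemma powqn: "x ^ (q ^ n) = (x::'a)"
  using ff_power_card[of x] cardV by simp

lemma anz: "a \<noteq> 0"
proof
  assume "a = 0"
  with an n0 show False by (simp add: power_0_left)
qed

lemma aqk: "(a ^ j) ^ q = a ^ j"
  by (metis power_mult mult.commute aq)

lemma G_coeff: "\<forall>i. coeff (gp a n) i ^ q = coeff (gp a n) i"
  using qpos by (auto simp: gp_coeff aqk power_0_left)

lemma m_coeff: "\<forall>i. coeff (monom 1 n - 1 :: 'a poly) i ^ q = coeff (monom 1 n - 1 :: 'a poly) i"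
proof
  fix i
  have "(coeff (monom 1 n) i - coeff (1::'a poly) i) ^ q = coeff (monom 1 n) i ^ q - coeff (1::'a poly) i ^ q"
    by (rule frob_diff[OF qpos frob])
  also have "\<dots> = coeff (monom 1 n) i - coeff (1::'a poly) i"
    using qpos by (simp add: coeff_monom coeff_1 power_0_left)
  finally show "coeff (monom 1 n - 1 :: 'a poly) i ^ q = coeff (monom 1 n - 1 :: 'a poly) i" by simp
qed

lemma L_m: "poly (linq q (monom 1 n - 1 :: 'a poly)) x = 0"
  by (simp add: linq_diff linq_monom1 linq_1 powqn)

lemma L_m_mult: "poly (linq q (w * (monom 1 n - 1 :: 'a poly))) x = 0"
  by (simp add: L_mult[OF m_coeff] L_m L_x0)

lemma G_m: "[:-a, 1:] * gp a n = monom 1 n - 1"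
  using gp_mult[of a n] an by (simp del: mult_pCons_left add: one_pCons)

lemma Lg_q: "poly (linq q (gp a n)) x ^ q = a * poly (linq q (gp a n)) x"
proof -
  let ?G = "gp a n"
  have "poly (linq q ?G) x ^ q = poly (linq q ?G) (x ^ q)" by (rule L_frob[OF G_coeff])
  also have "\<dots> = poly (linq q (pCons 0 ?G)) x" by (simp add: linq_pCons)
  also have "pCons 0 ?G = [:-a, 1:] * ?G + smult a ?G" by simp
  also have "poly (linq q ([:-a, 1:] * ?G + smult a ?G)) x = a * poly (linq q ?G) x"
    by (simp only: linq_add linq_smult G_m L_m) simp
  finally show ?thesis .
qed

lemma Lg_in: "inverse \<delta> * poly (linq q (gp a n)) x \<in> subfq q"
proof -
  let ?L = "poly (linq q (gp a n)) x"
  have "(inverse \<delta> * ?L) ^ q = inverse (\<delta> ^ q) * ?L ^ q" by (simp add: power_mult_distrib power_inverse)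
  also have "\<dots> = inverse (a * \<delta>) * (a * ?L)" by (simp only: dq Lg_q)
  also have "\<dots> = inverse \<delta> * ?L" using anz by (simp add: inverse_mult_distrib)
  finally show ?thesis unfolding subfq_def by simp
qed

lemma delta_pow: "\<delta> ^ (q ^ j) = a ^ j * \<delta>"
proof (induction j)
  case (Suc j)
  have "\<delta> ^ (q ^ Suc j) = (\<delta> ^ (q ^ j)) ^ q" by (simp only: power_Suc2 power_mult)
  also have "\<dots> = (a ^ j) ^ q * \<delta> ^ q" using Suc by (simp only: power_mult_distrib)
  also have "\<dots> = a ^ Suc j * \<delta>" by (simp only: aqk dq) simp
  finally show ?case .
qed simp

lemma Lg_sum: "poly (linq q (gp a n)) x = (\<Sum>i<n. a ^ (n - 1 - i) * x ^ (q ^ i))"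
proof -
  have "degree (gp a n) \<le> n - 1" using gp_degree[OF n0, of a] by linarith
  then have "poly (linq q (gp a n)) x = (\<Sum>i\<le>n-1. coeff (gp a n) i * x ^ (q ^ i))"
    by (rule linq_sum)
  also have "{..n-1} = {..<n}" using n0 by auto
  finally show ?thesis by (rule trans) (rule sum.cong, simp_all add: gp_coeff)
qed

lemma Lg_delta: "poly (linq q (gp a n)) (\<delta> * u) = \<delta> * (1 / a) * trq q n u"
proof -
  have "poly (linq q (gp a n)) (\<delta> * u) = (\<Sum>i<n. a ^ (n - 1 - i) * (\<delta> * u) ^ (q ^ i))"
    by (rule Lg_sum)
  also have "\<dots> = (\<Sum>i<n. a ^ (n - 1) * \<delta> * u ^ (q ^ i))"
  proof (rule sum.cong)
    fix i assume "i \<in> {..<n}"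
    then have e1: "a ^ (n - 1 - i) * a ^ i = a ^ (n - 1)" by (subst power_add[symmetric]) simp
    have e2: "(\<delta> * u) ^ (q ^ i) = a ^ i * \<delta> * u ^ (q ^ i)" by (simp only: power_mult_distrib delta_pow)
    show "a ^ (n - 1 - i) * (\<delta> * u) ^ (q ^ i) = a ^ (n - 1) * \<delta> * u ^ (q ^ i)"
      unfolding e2 e1[symmetric] by (simp only: mult.assoc)
  qed simp
  also have "\<dots> = \<delta> * a ^ (n - 1) * trq q n u"
    by (simp add: trq_def sum_distrib_left mult.assoc mult.left_commute)
  also have "a ^ (n - 1) = 1 / a"
  proof -
    have "a * a ^ (n - 1) = 1" using an n0 by (cases n) simp_all
    then show ?thesis using anz by (simp add: eq_divide_eq mult.commute)
  qed
  finally show ?thesis .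
qed

lemma G_nz: "gp a n \<noteq> 0"
  using gp_coeff[of a n "n - 1"] n0 by auto

lemma Lg_range: "range (poly (linq q (gp a n))) = (\<lambda>t. \<delta> * t) ` subfq q"
proof -
  let ?L = "poly (linq q (gp a n))"
  let ?K = "{x. ?L x = 0}"
  have sub: "range ?L \<subseteq> (\<lambda>t. \<delta> * t) ` subfq q"
  proof
    fix y assume "y \<in> range ?L"
    then obtain x where "y = ?L x" by auto
    then show "y \<in> (\<lambda>t. \<delta> * t) ` subfq q"
      using Lg_in[of x] dnz by (intro image_eqI[of _ _ "inverse \<delta> * y"]) auto
  qed
  have cK: "card ?K \<le> q ^ (n - 1)"
    using linq_roots[OF q1 G_nz] gp_degree[OF n0, of a] by simp
  define s where "s = inv ?L"
  have "inj (\<lambda>x. (?L x, x - s (?L x)))"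
  proof (rule injI)
    fix x y assume "(?L x, x - s (?L x)) = (?L y, y - s (?L y))"
    then show "x = y" by (metis prod.inject diff_left_imp_eq diff_add_cancel)
  qed
  moreover have "(\<lambda>x. (?L x, x - s (?L x))) ` UNIV \<subseteq> range ?L \<times> ?K"
  proof -
    have "?L (x - s (?L x)) = 0" for x
    proof -
      have "?L (s (?L x)) = ?L x" unfolding s_def by (rule f_inv_into_f) simp
      then show "?L (x - s (?L x)) = 0" by (simp only: L_diffx) simp
    qed
    then show ?thesis by auto
  qed
  ultimately have "card (UNIV :: 'a set) \<le> card (range ?L \<times> ?K)"
    by (intro card_inj_on_le) auto
  also have "\<dots> = card (range ?L) * card ?K" by (rule card_cartesian_product)
  also have "\<dots> \<le> card (range ?L) * q ^ (n - 1)" using cK by simp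
  finally have "q * q ^ (n - 1) \<le> card (range ?L) * q ^ (n - 1)"
    using cardV n0 by (metis power_eq_if neq0_conv)
  then have c1: "q \<le> card (range ?L)" using q1 by simp
  have "card ((\<lambda>t. \<delta> * t) ` subfq q) \<le> card (subfq q :: 'a set)" by (rule card_image_le) simp
  also have "\<dots> \<le> q" by (rule subfq_card[OF q1])
  finally show ?thesis using sub c1
    by (intro card_seteq) auto
qed

lemma Lg_onto: "t \<in> subfq q \<Longrightarrow> \<exists>x. poly (linq q (gp a n)) x = \<delta> * t"
  using Lg_range by (metis UNIV_I image_eqI rangeE)

abbreviation "LG \<equiv> poly (linq q (gp a n))"
abbreviation "LH \<equiv> poly (linq q h)"
abbreviation "PP \<equiv> (\<lambda>x. poly f (LG x) + poly k (LG x) * LH x)"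

lemma h_coeff: "\<forall>i. coeff h i ^ q = coeff h i"
  using hF by (simp add: subfq_def)

lemma LG_LH: "LG (LH x) = poly h a * LG x"
proof -
  have "LG (LH x) = poly (linq q (gp a n * h)) x" by (simp add: L_mult[OF h_coeff])
  also have "\<dots> = poly (linq q (h * gp a n)) x" by (simp add: mult.commute)
  also have "\<dots> = LH (LG x)" by (simp add: L_mult[OF G_coeff])
  also have "\<dots> = poly h a * LG x" by (rule L_eig[OF aq Lg_q])
  finally show ?thesis .
qed

lemma key: "inverse \<delta> * LG (PP x) = Qbar q n a \<delta> f h k (inverse \<delta> * LG x)"
proof -
  define t where "t = inverse \<delta> * LG x"
  have tF: "t ^ q = t" using Lg_in[of x] unfolding t_def subfq_def by simp
  have y: "LG x = \<delta> * t" unfolding t_def using dnz by simp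
  have kt: "poly k (\<delta> * t) ^ q = poly k (\<delta> * t)"
    using kF tF by (auto simp: subfq_def)
  have tpow: "(t ^ i) ^ q = t ^ i" for i
    by (metis power_mult mult.commute tF)
  have f_exp: "poly f (\<delta> * t) = (\<Sum>i\<le>degree f. t ^ i * (\<delta> * (\<delta> powi (int i - 1) * coeff f i)))"
    unfolding poly_altdef
  proof (rule sum.cong)
    fix i
    have "t ^ i * (\<delta> * (\<delta> powi (int i - 1) * coeff f i)) = t ^ i * ((\<delta> * \<delta> powi (int i - 1)) * coeff f i)"
      by (simp only: mult.assoc)
    also have "\<dots> = coeff f i * (\<delta> * t) ^ i" by (simp add: powi_shift[OF dnz] power_mult_distrib)
    finally show "coeff f i * (\<delta> * t) ^ i = t ^ i * (\<delta> * (\<delta> powi (int i - 1) * coeff f i))" by (rule sym)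
  qed simp
  have LGf: "LG (poly f (\<delta> * t)) = (\<Sum>i\<le>degree f. t ^ i * (\<delta> * (1 / a) * trq q n (\<delta> powi (int i - 1) * coeff f i)))"
    unfolding f_exp by (simp add: linq_sumx[OF L_addx L_x0] L_scalx[OF tpow] Lg_delta)
  have "LG (PP x) = LG (poly f (\<delta> * t)) + poly k (\<delta> * t) * (poly h a * (\<delta> * t))"
    by (simp add: L_addx L_scalx[OF kt] LG_LH y)
  also have "inverse \<delta> * \<dots> = Qbar q n a \<delta> f h k t"
  proof -
    have dd: "\<And>X. \<delta> * (inverse \<delta> * X) = X" using dnz by (simp add: mult.assoc[symmetric])
    show ?thesis unfolding LGf Qbar_def
      by (simp add: distrib_left sum_distrib_left mult_ac dd)
  qed
  finally show ?thesis unfolding t_def .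
qed

lemma gcd1_ker:
  assumes "gcd h (gp a n) = 1" "LG z = 0" "LH z = 0"
  shows "z = 0"
proof -
  obtain s t where st: "s * h + t * gp a n = 1"
    using bezout_coefficients_fst_snd[of h "gp a n"] assms(1) by metis
  have "z = poly (linq q (s * h + t * gp a n)) z" by (simp add: st linq_1)
  also have "\<dots> = 0"
    by (simp add: linq_add L_mult[OF h_coeff] L_mult[OF G_coeff] assms L_x0)
  finally show ?thesis .
qed

lemma P_bij_from:
  assumes g: "gcd h (gp a n) = 1" and Q: "bij_betw (Qbar q n a \<delta> f h k) (subfq q) (subfq q)"
  shows "bij PP"
proof -
  have "inj PP"
  proof (rule injI)
    fix x x' assume eq: "PP x = PP x'"
    have "Qbar q n a \<delta> f h k (inverse \<delta> * LG x) = Qbar q n a \<delta> f h k (inverse \<delta> * LG x')"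
      using key[of x] key[of x'] eq by simp
    then have "inverse \<delta> * LG x = inverse \<delta> * LG x'"
      using Q Lg_in[of x] Lg_in[of x'] unfolding bij_betw_def inj_on_def by blast
    then have e1: "LG x = LG x'" using dnz by simp
    define t where "t = inverse \<delta> * LG x"
    have "poly k (\<delta> * t) \<noteq> 0" using kF Lg_in[of x] unfolding t_def by auto
    moreover have "\<delta> * t = LG x" unfolding t_def using dnz by simp
    ultimately have "poly k (LG x) \<noteq> 0" by simp
    then have "LH x = LH x'" using eq e1 by simp
    then have "LH (x - x') = 0" by (simp add: L_diffx)
    moreover have "LG (x - x') = 0" using e1 by (simp add: L_diffx)
    ultimately have "x - x' = 0" using gcd1_ker[OF g] by blast
    then show "x = x'" by simp
  qed
  then show ?thesis unfolding bij_def using finite_UNIV_inj_surj[of PP] by simp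
qed

lemma P_bij_Q:
  assumes "bij PP"
  shows "bij_betw (Qbar q n a \<delta> f h k) (subfq q) (subfq q)"
proof -
  let ?phi = "\<lambda>x. inverse \<delta> * LG x"
  have rphi: "range ?phi = subfq q"
  proof
    show "range ?phi \<subseteq> subfq q" using Lg_in by auto
    show "subfq q \<subseteq> range ?phi"
    proof
      fix t :: 'a assume "t \<in> subfq q"
      then obtain x where "LG x = \<delta> * t" using Lg_onto by blast
      then have "?phi x = t" using dnz by simp
      then show "t \<in> range ?phi" by (metis rangeI)
    qed
  qed
  have "Qbar q n a \<delta> f h k ` subfq q = Qbar q n a \<delta> f h k ` range ?phi" using rphi by simp
  also have "\<dots> = range (\<lambda>x. ?phi (PP x))" by (auto simp: key image_iff)
  also have "\<dots> = ?phi ` range PP" by (simp add: image_image)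
  also have "range PP = UNIV" using assms by (simp add: bij_def surj_def)
  also have "?phi ` UNIV = subfq q" by (rule rphi)
  finally have im: "Qbar q n a \<delta> f h k ` subfq q = subfq q" .
  have "finite (subfq q :: 'a set)" by simp
  then have "inj_on (Qbar q n a \<delta> f h k) (subfq q)"
    using im by (intro eq_card_imp_inj_on) simp_all
  then show ?thesis using im unfolding bij_betw_def by simp
qed

lemma m_nz: "(monom 1 n - 1 :: 'a poly) \<noteq> 0"
  using G_m G_nz by (metis mult_eq_0_iff pCons_eq_0_iff zero_neq_one)

lemma m_degree: "degree (monom 1 n - 1 :: 'a poly) = n"
proof -
  have "degree ([:-a, 1:] * gp a n) = 1 + (n - 1)"
    using G_nz gp_degree[OF n0, of a] by (subst degree_mult_eq) auto
  then show ?thesis using G_m n0 by simp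
qed

lemma exists_nonroot:
  assumes "e \<noteq> 0" "degree e < n"
  shows "\<exists>w. poly (linq q e) w \<noteq> (0::'a)"
proof (rule ccontr)
  assume "\<not> ?thesis"
  then have "{x. poly (linq q e) x = 0} = (UNIV :: 'a set)" by auto
  then have "q ^ n \<le> q ^ degree e" using linq_roots[OF q1 assms(1)] cardV by simp
  moreover have "q ^ degree e < q ^ n" using assms(2) q1 by (rule power_strict_increasing)
  ultimately show False by simp
qed

lemma P_bij_gcd:
  assumes "bij PP"
  shows "gcd h (gp a n) = 1"
proof (rule ccontr)
  assume ng: "gcd h (gp a n) \<noteq> 1"
  let ?G = "gp a n"
  define d where "d = gcd h ?G"
  have dnz0: "d \<noteq> 0" unfolding d_def using G_nz by simp
  have ddeg: "degree d \<noteq> 0"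
  proof
    assume "degree d = 0"
    then have "is_unit d" using is_unit_iff_degree[OF dnz0] by simp
    then show False using ng unfolding d_def by simp
  qed
  define d' where "d' = smult (inverse (lead_coeff d)) d"
  have ld: "lead_coeff d \<noteq> 0" using dnz0 by simp
  have d'lead: "lead_coeff d' = 1" unfolding d'_def using ld by (simp add: lead_coeff_smult)
  have d'deg: "degree d' = degree d" unfolding d'_def using ld by simp
  have d'nz: "d' \<noteq> 0" using d'lead by auto
  have d'h: "d' dvd h" unfolding d'_def d_def using ld by (simp add: smult_dvd_iff)
  have d'G: "d' dvd ?G" unfolding d'_def d_def using ld by (simp add: smult_dvd_iff)
  have sh: "sig q h = h" using sig_id_iff[OF qpos frob] h_coeff by blast
  have sG: "sig q ?G = ?G" using sig_id_iff[OF qpos frob] G_coeff by blast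
  have "sig q d' dvd h" using sig_dvd[OF qpos frob d'h] sh by simp
  moreover have "sig q d' dvd ?G" using sig_dvd[OF qpos frob d'G] sG by simp
  ultimately have "sig q d' dvd d" unfolding d_def by (rule gcd_greatest)
  then have "sig q d' dvd d'" unfolding d'_def using ld by (simp add: dvd_smult_iff)
  then obtain r where r: "d' = sig q d' * r" by (elim dvdE)
  have sdeg: "degree (sig q d') = degree d'" by (rule sig_degree[OF qpos frob])
  have snz: "sig q d' \<noteq> 0" using r d'nz by auto
  have rnz: "r \<noteq> 0" using r d'nz by auto
  have "degree d' = degree (sig q d') + degree r" using r degree_mult_eq[OF snz rnz] by simp
  then have rdeg: "degree r = 0" using sdeg by simp
  have "lead_coeff (sig q d') = 1"
    using sdeg d'lead qpos by (simp add: sig_coeff[OF qpos frob])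
  then have "lead_coeff r = 1" using r d'lead by (metis lead_coeff_mult mult_1)
  then have "r = 1" using degree_0_id[OF rdeg] rdeg by (simp add: one_pCons)
  then have sd: "sig q d' = d'" using r by simp
  let ?m = "monom 1 n - 1 :: 'a poly"
  have "d' dvd [:-a, 1:] * ?G" using d'G by (rule dvd_mult)
  then have "d' dvd ?m" by (simp only: G_m)
  then obtain e where e: "?m = d' * e" by (elim dvdE)
  have sm: "sig q ?m = ?m" using sig_id_iff[OF qpos frob] m_coeff by blast
  have "d' * sig q e = d' * e"
    using sm e sd sig_mult[OF qpos frob, of d' e] by simp
  then have se: "sig q e = e" using d'nz by simp
  then have ecoeff: "\<forall>i. coeff e i ^ q = coeff e i" using sig_id_iff[OF qpos frob] by blast
  have enz: "e \<noteq> 0" using e m_nz by auto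
  have "n = degree d' + degree e" using e m_degree degree_mult_eq[OF d'nz enz] by simp
  then have edeg: "degree e < n" using d'deg ddeg by simp
  obtain w where w: "poly (linq q e) w \<noteq> 0" using exists_nonroot[OF enz edeg] by blast
  define z where "z = poly (linq q e) w"
  obtain g' where g': "?G = d' * g'" using d'G by (elim dvdE)
  obtain h' where h': "h = d' * h'" using d'h by (elim dvdE)
  have "LG z = poly (linq q (?G * e)) w" unfolding z_def by (simp add: L_mult[OF ecoeff])
  also have "?G * e = g' * ?m" using g' e by (simp add: mult_ac)
  finally have z1: "LG z = 0" by (simp add: L_m_mult)
  have "LH z = poly (linq q (h * e)) w" unfolding z_def by (simp add: L_mult[OF ecoeff])
  also have "h * e = h' * ?m" using h' e by (simp add: mult_ac)
  finally have z2: "LH z = 0" by (simp add: L_m_mult)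
  have "PP z = PP 0" using z1 z2 by (simp add: L_x0)
  moreover have "z \<noteq> 0" using w z_def by simp
  ultimately show False using assms unfolding bij_def inj_def by blast
qed

lemma H_unique:
  fixes m H1 H2 :: "'a poly"
  assumes cop: "coprime h m" and mnz: "m \<noteq> 0"
  and p1: "pcong (h * H1) 1 m" and p2: "pcong (h * H2) 1 m"
  and c1: "H1 = 0 \<or> degree H1 < degree m" and c2: "H2 = 0 \<or> degree H2 < degree m"
  shows "H1 = H2"
proof (rule ccontr)
  assume ne: "H1 \<noteq> H2"
  have "m dvd (h * H1 - 1) - (h * H2 - 1)" using p1 p2 unfolding pcong_def by (rule dvd_diff)
  then have "m dvd h * (H1 - H2)" by (simp add: algebra_simps)
  then have "m dvd H1 - H2" using cop by (simp add: coprime_dvd_mult_right_iff coprime_commute)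
  then have "degree m \<le> degree (H1 - H2)" using ne by (intro dvd_imp_degree_le) auto
  moreover have "degree (H1 - H2) < degree m"
  proof -
    have "degree (H1 - H2) \<le> max (degree H1) (degree H2)" by (rule degree_diff_le_max)
    moreover have "degree m > 0"
    proof (rule ccontr)
      assume "\<not> degree m > 0"
      then have "H1 = 0" "H2 = 0" using c1 c2 by auto
      then show False using ne by simp
    qed
    ultimately show ?thesis using c1 c2 by auto
  qed
  ultimately show False by simp
qed

lemma H_exists:
  fixes m :: "'a poly"
  assumes cop: "coprime h m" and mnz: "m \<noteq> 0" and sm: "sig q m = m"
  shows "\<exists>H. (\<forall>i. coeff H i \<in> subfq q) \<and> (H = 0 \<or> degree H < degree m) \<and> pcong (h * H) 1 m"
proof -
  obtain s t where st: "s * h + t * m = 1"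
    using bezout_coefficients_fst_snd[of h m] cop by (metis coprime_imp_gcd_eq_1)
  define H0 where "H0 = s mod m"
  have "h * H0 - 1 = h * (s - s div m * m) - (s * h + t * m)"
    unfolding H0_def st[symmetric] by (simp add: minus_div_mult_eq_mod)
  also have "\<dots> = m * (- (h * (s div m)) - t)" by (simp add: algebra_simps)
  finally have pc: "pcong (h * H0) 1 m" unfolding pcong_def by simp
  have c: "H0 = 0 \<or> degree H0 < degree m"
    unfolding H0_def using degree_mod_less'[OF mnz] by blast
  have sh: "sig q h = h" using sig_id_iff[OF qpos frob] h_coeff by blast
  have "sig q m dvd sig q (h * H0 - 1)" using pc unfolding pcong_def by (rule sig_dvd[OF qpos frob])
  then have pc': "pcong (h * sig q H0) 1 m"
    unfolding pcong_def using sm sh by (simp add: sig_diff[OF qpos frob] sig_mult[OF qpos frob] sig_1[OF qpos frob])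
  have c': "sig q H0 = 0 \<or> degree (sig q H0) < degree m"
    using c sig_degree[OF qpos frob, of H0] sig_0[OF qpos frob] by auto
  have "sig q H0 = H0" by (rule H_unique[OF cop mnz pc' pc c' c])
  then have "\<forall>i. coeff H0 i \<in> subfq q" using sig_id_iff[OF qpos frob] unfolding subfq_def by blast
  then show ?thesis using pc c by blast
qed

lemma pcong_eval:
  assumes "pcong F M (monom 1 q - [:0, 1:])" "s ^ q = (s::'a)"
  shows "poly F s = poly M s"
proof -
  obtain r where "F - M = (monom 1 q - [:0, 1:]) * r" using assms(1) unfolding pcong_def by (elim dvdE)
  then have "poly (F - M) s = (s ^ q - s) * poly r s" by (simp add: poly_monom)
  then show ?thesis using assms(2) by simp
qed

lemma kappa_inv:
  assumes "c ^ q = (c::'a)" "c \<noteq> 0"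
  shows "c ^ (q - 2) * c = 1"
proof -
  have "c ^ (q - 2) * c = c ^ (q - 1)" using q1 by (metis Suc_diff_Suc numeral_2_eq_2 power_Suc2 diff_Suc_1 One_nat_def)
  moreover have "c * c ^ (q - 1) = c * 1" using assms(1) q1 by (metis power_Suc One_nat_def Suc_pred qpos mult_1_right)
  ultimately show ?thesis using assms(2) by simp
qed

lemma P0_gen:
  fixes R F H :: "'a poly" and c c' :: 'a
  assumes R: "\<forall>y\<in>subfq q. poly R y \<in> subfq q \<and> Qbar q n a \<delta> f h k (poly R y) = y
                              \<and> poly R (Qbar q n a \<delta> f h k y) = y"
  and FM: "\<And>s. s \<in> subfq q \<Longrightarrow> poly F s = - (poly k (\<delta> * poly R s) ^ (q - 2) * poly (linq q H) (poly f (\<delta> * poly R s))) + c * (\<delta> * poly R s)"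
  and HH: "\<And>x. poly (linq q H) (LH x) = x + c' * LG x"
  and cc: "c + c' = 0"
  shows "poly F (inverse \<delta> * LG (PP x))
              + (poly k (\<delta> * poly R (inverse \<delta> * LG (PP x)))) ^ (q - 2) * poly (linq q H) (PP x) = x"
proof -
  define t where "t = inverse \<delta> * LG x"
  have tF: "t \<in> subfq q" unfolding t_def by (rule Lg_in)
  have s: "inverse \<delta> * LG (PP x) = Qbar q n a \<delta> f h k t" unfolding t_def by (rule key)
  have Rs: "poly R (inverse \<delta> * LG (PP x)) = t" using R tF s by simp
  have y: "\<delta> * t = LG x" unfolding t_def using dnz by simp
  have sF: "inverse \<delta> * LG (PP x) \<in> subfq q" by (rule Lg_in)
  define \<kappa> where "\<kappa> = poly k (LG x)"
  have kq: "\<kappa> ^ q = \<kappa>" "\<kappa> \<noteq> 0" using kF tF y unfolding \<kappa>_def subfq_def by force+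
  have ki: "\<kappa> ^ (q - 2) * \<kappa> = 1" by (rule kappa_inv[OF kq])
  define LHf where "LHf = poly (linq q H) (poly f (LG x))"
  have "poly (linq q H) (PP x) = LHf + \<kappa> * (x + c' * LG x)"
    unfolding LHf_def \<kappa>_def by (simp add: L_addx L_scalx[OF kq(1)[unfolded \<kappa>_def]] HH)
  moreover have "poly F (inverse \<delta> * LG (PP x)) = - (\<kappa> ^ (q - 2) * LHf) + c * LG x"
    using FM[OF sF] unfolding Rs y \<kappa>_def LHf_def .
  moreover have "poly k (\<delta> * poly R (inverse \<delta> * LG (PP x))) = \<kappa>" unfolding Rs y \<kappa>_def ..
  ultimately have "poly F (inverse \<delta> * LG (PP x))
              + (poly k (\<delta> * poly R (inverse \<delta> * LG (PP x)))) ^ (q - 2) * poly (linq q H) (PP x)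
     = (\<kappa> ^ (q - 2) * \<kappa>) * x + (c + (\<kappa> ^ (q - 2) * \<kappa>) * c') * LG x"
    by (simp add: algebra_simps)
  also have "\<dots> = x" using ki cc by simp
  finally show ?thesis .
qed

end



theorem theorem3p9:
  fixes p q n :: nat and a \<delta> :: "'a::{field_gcd,finite}"
    and f h k :: "'a poly"
  assumes "prime p" and "\<exists>e>0. q = p ^ e" and "n > 0"
    and "CARD('a) = q ^ n"
    and "a \<in> subfq q" and "a ^ n = 1"
    and "\<delta> \<noteq> 0" and "\<delta> ^ q = a * \<delta>"
    and "\<forall>i. coeff h i \<in> subfq q"
    and "\<forall>x\<in>subfq q. poly k (\<delta> * x) \<in> subfq q - {0}"
  defines "Lg \<equiv> poly (linq q (ga n a))"
  defines "P \<equiv> (\<lambda>x. poly f (Lg x) + poly k (Lg x) * poly (linq q h) x)"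
  defines "P0 \<equiv> (\<lambda>R F H x. poly F (inverse \<delta> * Lg x)
              + (poly k (\<delta> * poly R (inverse \<delta> * Lg x))) ^ (q - 2) * poly (linq q H) x)"
  shows "(bij P \<longleftrightarrow>
           (gcd h (ga n a) = 1 \<and> bij_betw (Qbar q n a \<delta> f h k) (subfq q) (subfq q)))
    \<and> (bij P \<longrightarrow>
         (\<forall>R. (\<forall>y\<in>subfq q. poly R y \<in> subfq q \<and> Qbar q n a \<delta> f h k (poly R y) = y
                              \<and> poly R (Qbar q n a \<delta> f h k y) = y) \<longrightarrow>
           (p dvd n \<longrightarrow>
              (\<exists>!H. (\<forall>i. coeff H i \<in> subfq q) \<and> degree H + 1 \<le> n
                     \<and> pcong (h * H) 1 (monom 1 n - 1)) \<and>
              (\<forall>H F. (\<forall>i. coeff H i \<in> subfq q) \<and> degree H + 1 \<le> n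
                     \<and> pcong (h * H) 1 (monom 1 n - 1)
                     \<and> pcong F (- (pcompose k (smult \<delta> R) ^ (q - 2)
                                   * pcompose (linq q H) (pcompose f (smult \<delta> R))))
                             (monom 1 q - [:0, 1:])
                     \<longrightarrow> (\<forall>x. P0 R F H (P x) = x) \<and> (\<forall>x. P (P0 R F H x) = x))) \<and>
           (\<not> p dvd n \<longrightarrow>
              (\<exists>!H. (\<forall>i. coeff H i \<in> subfq q) \<and> (H = 0 \<or> degree H + 2 \<le> n)
                     \<and> pcong (h * H) 1 (ga n a)) \<and>
              (\<forall>H F. (\<forall>i. coeff H i \<in> subfq q) \<and> (H = 0 \<or> degree H + 2 \<le> n)
                     \<and> pcong (h * H) 1 (ga n a)
                     \<and> pcong F (pcompose (- (k ^ (q - 2) * pcompose (linq q H) f)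
                                   + smult (a * (1 - poly h a * poly H a) / of_nat n) [:0, 1:])
                                  (smult \<delta> R))
                             (monom 1 q - [:0, 1:])
                     \<longrightarrow> (\<forall>x. P0 R F H (P x) = x) \<and> (\<forall>x. P (P0 R F H x) = x)))))"
proof -
  obtain e where e0: "e > 0" and qe: "q = p ^ e" using assms(2) by blast
  have p2: "p \<ge> 2" using assms(1) prime_ge_2_nat by blast
  have q1: "q > 1" using qe e0 p2 by (metis one_less_power less_le_trans one_less_numeral_iff semiring_norm(76))
  have q0: "q > 0" using q1 by simp
  have cardp: "CARD('a) = p ^ (e * n)" using assms(4) qe by (simp add: power_mult)
  have char: "CHAR('a) = p" using ff_CHAR[OF assms(1) cardp] e0 assms(3) by simp
  have frob: "\<And>x y::'a. (x + y) ^ q = x ^ q + y ^ q" using ff_frob[OF char assms(1) qe] by blast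
  have aq: "a ^ q = a" using assms(5) by (simp add: subfq_def)
  have gaeq: "ga n a = gp a n" by (rule ga_gp[OF assms(6)])
  note ctx = q1 frob assms(4) assms(3) aq assms(6) assms(7) assms(8) assms(9) assms(10)
  have Pd: "P = (\<lambda>x. poly f (poly (linq q (gp a n)) x) + poly k (poly (linq q (gp a n)) x) * poly (linq q h) x)"
    unfolding P_def Lg_def gaeq ..
  have P0d: "\<And>R F H x. P0 R F H x = poly F (inverse \<delta> * poly (linq q (gp a n)) x)
              + (poly k (\<delta> * poly R (inverse \<delta> * poly (linq q (gp a n)) x))) ^ (q - 2) * poly (linq q H) x"
    unfolding P0_def Lg_def gaeq ..
  have part1: "bij P \<longleftrightarrow> (gcd h (ga n a) = 1 \<and> bij_betw (Qbar q n a \<delta> f h k) (subfq q) (subfq q))"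
    unfolding Pd gaeq
  proof
    assume b: "bij (\<lambda>x. poly f (poly (linq q (gp a n)) x) + poly k (poly (linq q (gp a n)) x) * poly (linq q h) x)"
    show "gcd h (gp a n) = 1 \<and> bij_betw (Qbar q n a \<delta> f h k) (subfq q) (subfq q)"
      by (rule conjI[OF P_bij_gcd[OF ctx b] P_bij_Q[OF ctx b]])
  next
    assume gb: "gcd h (gp a n) = 1 \<and> bij_betw (Qbar q n a \<delta> f h k) (subfq q) (subfq q)"
    show "bij (\<lambda>x. poly f (poly (linq q (gp a n)) x) + poly k (poly (linq q (gp a n)) x) * poly (linq q h) x)"
      using gb by (intro P_bij_from[OF ctx]) simp_all
  qed
  show ?thesis
  proof (rule conjI)
    show "bij P \<longleftrightarrow> (gcd h (ga n a) = 1 \<and> bij_betw (Qbar q n a \<delta> f h k) (subfq q) (subfq q))"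
      by (rule part1)
  next
  show "bij P \<longrightarrow>
         (\<forall>R. (\<forall>y\<in>subfq q. poly R y \<in> subfq q \<and> Qbar q n a \<delta> f h k (poly R y) = y
                              \<and> poly R (Qbar q n a \<delta> f h k y) = y) \<longrightarrow>
           (p dvd n \<longrightarrow>
              (\<exists>!H. (\<forall>i. coeff H i \<in> subfq q) \<and> degree H + 1 \<le> n
                     \<and> pcong (h * H) 1 (monom 1 n - 1)) \<and>
              (\<forall>H F. (\<forall>i. coeff H i \<in> subfq q) \<and> degree H + 1 \<le> n
                     \<and> pcong (h * H) 1 (monom 1 n - 1)
                     \<and> pcong F (- (pcompose k (smult \<delta> R) ^ (q - 2)
                                   * pcompose (linq q H) (pcompose f (smult \<delta> R))))
                             (monom 1 q - [:0, 1:])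
                     \<longrightarrow> (\<forall>x. P0 R F H (P x) = x) \<and> (\<forall>x. P (P0 R F H x) = x))) \<and>
           (\<not> p dvd n \<longrightarrow>
              (\<exists>!H. (\<forall>i. coeff H i \<in> subfq q) \<and> (H = 0 \<or> degree H + 2 \<le> n)
                     \<and> pcong (h * H) 1 (ga n a)) \<and>
              (\<forall>H F. (\<forall>i. coeff H i \<in> subfq q) \<and> (H = 0 \<or> degree H + 2 \<le> n)
                     \<and> pcong (h * H) 1 (ga n a)
                     \<and> pcong F (pcompose (- (k ^ (q - 2) * pcompose (linq q H) f)
                                   + smult (a * (1 - poly h a * poly H a) / of_nat n) [:0, 1:])
                                  (smult \<delta> R))
                             (monom 1 q - [:0, 1:])
                     \<longrightarrow> (\<forall>x. P0 R F H (P x) = x) \<and> (\<forall>x. P (P0 R F H x) = x))))"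
  proof (intro impI allI)
    fix R :: "'a poly"
    assume bP: "bij P"
    assume R: "\<forall>y\<in>subfq q. poly R y \<in> subfq q \<and> Qbar q n a \<delta> f h k (poly R y) = y
                              \<and> poly R (Qbar q n a \<delta> f h k y) = y"
    have g1: "gcd h (gp a n) = 1" using bP part1 gaeq by simp
    have copG: "coprime h (gp a n)" using g1 by (simp add: coprime_iff_gcd_eq_1)
    have hc: "\<forall>i. coeff h i ^ q = coeff h i" using assms(9) by (simp add: subfq_def)
    have second: "\<forall>x. P (P0 R F H x) = x" if first: "\<forall>x. P0 R F H (P x) = x" for F H
    proof
      fix x
      obtain z where "x = P z" using bP unfolding bij_def surj_def by blast
      then show "P (P0 R F H x) = x" using first by simp
    qed
    have caseP: "(\<exists>!H. (\<forall>i. coeff H i \<in> subfq q) \<and> degree H + 1 \<le> n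
                     \<and> pcong (h * H) 1 (monom 1 n - 1)) \<and> (\<forall>H F. (\<forall>i. coeff H i \<in> subfq q) \<and> degree H + 1 \<le> n
                     \<and> pcong (h * H) 1 (monom 1 n - 1)
                     \<and> pcong F (- (pcompose k (smult \<delta> R) ^ (q - 2)
                                   * pcompose (linq q H) (pcompose f (smult \<delta> R))))
                             (monom 1 q - [:0, 1:])
                     \<longrightarrow> (\<forall>x. P0 R F H (P x) = x) \<and> (\<forall>x. P (P0 R F H x) = x))" if pn: "p dvd n"
    proof -
      let ?m = "monom 1 n - 1 :: 'a poly"
      have "of_nat n = (0::'a)" using pn char by (simp add: of_nat_eq_0_iff_char_dvd)
      then have "poly (gp a n) a = 0" by (simp add: gp_poly)
      then have "[:-a, 1:] dvd gp a n" by (simp add: poly_eq_0_iff_dvd)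
      then have "[:-a, 1:] * gp a n dvd gp a n * gp a n" by (rule mult_dvd_mono) simp
      then have mdvd: "?m dvd gp a n * gp a n" by (simp only: G_m[OF ctx])
      have cop: "coprime h ?m"
        by (rule coprime_divisors[OF dvd_refl mdvd]) (simp add: copG)
      have mnz: "?m \<noteq> 0" by (rule m_nz[OF ctx])
      have mdeg: "degree ?m = n" by (rule m_degree[OF ctx])
      have sm: "sig q ?m = ?m" using sig_id_iff[OF q0 frob] m_coeff[OF ctx] q1 by simp
      have condeq: "\<And>H::'a poly. (H = 0 \<or> degree H < degree ?m) \<longleftrightarrow> degree H + 1 \<le> n"
        using mdeg assms(3) by auto
      have A: "\<exists>!H. (\<forall>i. coeff H i \<in> subfq q) \<and> degree H + 1 \<le> n \<and> pcong (h * H) 1 (monom 1 n - 1)"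
      proof -
        obtain H0 where "(\<forall>i. coeff H0 i \<in> subfq q) \<and> (H0 = 0 \<or> degree H0 < degree ?m) \<and> pcong (h * H0) 1 ?m"
          using H_exists[OF ctx cop mnz sm] by blast
        then show ?thesis using H_unique[OF ctx cop mnz] condeq by (intro ex1I[of _ H0]) (blast+)
      qed
      have B: "(\<forall>H F. (\<forall>i. coeff H i \<in> subfq q) \<and> degree H + 1 \<le> n
                     \<and> pcong (h * H) 1 (monom 1 n - 1)
                     \<and> pcong F (- (pcompose k (smult \<delta> R) ^ (q - 2)
                                   * pcompose (linq q H) (pcompose f (smult \<delta> R))))
                             (monom 1 q - [:0, 1:])
                     \<longrightarrow> (\<forall>x. P0 R F H (P x) = x) \<and> (\<forall>x. P (P0 R F H x) = x))"
      proof (intro allI impI)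
        fix H F :: "'a poly"
        assume HF: "(\<forall>i. coeff H i \<in> subfq q) \<and> degree H + 1 \<le> n
                       \<and> pcong (h * H) 1 (monom 1 n - 1)
                       \<and> pcong F (- (pcompose k (smult \<delta> R) ^ (q - 2)
                                     * pcompose (linq q H) (pcompose f (smult \<delta> R))))
                               (monom 1 q - [:0, 1:])"
        have FM: "poly F s = - (poly k (\<delta> * poly R s) ^ (q - 2) * poly (linq q H) (poly f (\<delta> * poly R s))) + 0 * (\<delta> * poly R s)"
          if "s \<in> subfq q" for s
        proof -
          have "poly F s = poly (- (pcompose k (smult \<delta> R) ^ (q - 2)
                                     * pcompose (linq q H) (pcompose f (smult \<delta> R)))) s"
            using HF that unfolding subfq_def by (intro pcong_eval[OF ctx]) auto
          then show ?thesis by (simp add: poly_pcompose)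
        qed
        have "?m dvd h * H - 1" using HF unfolding pcong_def by blast
        then obtain r where r: "h * H - 1 = ?m * r" by (elim dvdE)
        have HH: "poly (linq q H) (poly (linq q h) x) = x + 0 * poly (linq q (gp a n)) x" for x
        proof -
          have "poly (linq q H) (poly (linq q h) x) = poly (linq q (H * h)) x"
            by (simp add: linq_mult[OF q0 frob hc] q1)
          also have "H * h = 1 + r * ?m" using r by (simp add: algebra_simps)
          also have "poly (linq q (1 + r * ?m)) x = x"
            by (simp add: linq_add linq_1 L_m_mult[OF ctx])
          finally show ?thesis by simp
        qed
        have first: "\<forall>x. P0 R F H (P x) = x"
          unfolding P0d Pd using P0_gen[OF ctx R FM HH] by simp
        show "(\<forall>x. P0 R F H (P x) = x) \<and> (\<forall>x. P (P0 R F H x) = x)"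
          using first second[OF first] by blast
      qed
      show ?thesis by (rule conjI[OF A B])
    qed
    have caseN: "(\<exists>!H. (\<forall>i. coeff H i \<in> subfq q) \<and> (H = 0 \<or> degree H + 2 \<le> n)
                     \<and> pcong (h * H) 1 (ga n a)) \<and> (\<forall>H F. (\<forall>i. coeff H i \<in> subfq q) \<and> (H = 0 \<or> degree H + 2 \<le> n)
                     \<and> pcong (h * H) 1 (ga n a)
                     \<and> pcong F (pcompose (- (k ^ (q - 2) * pcompose (linq q H) f)
                                   + smult (a * (1 - poly h a * poly H a) / of_nat n) [:0, 1:])
                                  (smult \<delta> R))
                             (monom 1 q - [:0, 1:])
                     \<longrightarrow> (\<forall>x. P0 R F H (P x) = x) \<and> (\<forall>x. P (P0 R F H x) = x))" if pn: "\<not> p dvd n"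
    proof -
      let ?G = "gp a n"
      have n0: "of_nat n \<noteq> (0::'a)" using pn char by (simp add: of_nat_eq_0_iff_char_dvd)
      have mnz: "?G \<noteq> 0" by (rule G_nz[OF ctx])
      have mdeg: "degree ?G = n - 1" using gp_degree assms(3) by blast
      have sm: "sig q ?G = ?G" using sig_id_iff[OF q0 frob] G_coeff[OF ctx] q1 by simp
      have condeq: "\<And>H::'a poly. (H = 0 \<or> degree H < degree ?G) \<longleftrightarrow> (H = 0 \<or> degree H + 2 \<le> n)"
        using mdeg assms(3) by auto
      have A: "\<exists>!H. (\<forall>i. coeff H i \<in> subfq q) \<and> (H = 0 \<or> degree H + 2 \<le> n) \<and> pcong (h * H) 1 (ga n a)"
      proof -
        obtain H0 where "(\<forall>i. coeff H0 i \<in> subfq q) \<and> (H0 = 0 \<or> degree H0 < degree ?G) \<and> pcong (h * H0) 1 ?G"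
          using H_exists[OF ctx copG mnz sm] by blast
        then show ?thesis unfolding gaeq using H_unique[OF ctx copG mnz] condeq by (intro ex1I[of _ H0]) (blast+)
      qed
      have B: "(\<forall>H F. (\<forall>i. coeff H i \<in> subfq q) \<and> (H = 0 \<or> degree H + 2 \<le> n)
                     \<and> pcong (h * H) 1 (ga n a)
                     \<and> pcong F (pcompose (- (k ^ (q - 2) * pcompose (linq q H) f)
                                   + smult (a * (1 - poly h a * poly H a) / of_nat n) [:0, 1:])
                                  (smult \<delta> R))
                             (monom 1 q - [:0, 1:])
                     \<longrightarrow> (\<forall>x. P0 R F H (P x) = x) \<and> (\<forall>x. P (P0 R F H x) = x))"
      proof (intro allI impI)
        fix H F :: "'a poly"
        assume HF: "(\<forall>i. coeff H i \<in> subfq q) \<and> (H = 0 \<or> degree H + 2 \<le> n)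
                       \<and> pcong (h * H) 1 (ga n a)
                       \<and> pcong F (pcompose (- (k ^ (q - 2) * pcompose (linq q H) f)
                                     + smult (a * (1 - poly h a * poly H a) / of_nat n) [:0, 1:])
                                    (smult \<delta> R))
                               (monom 1 q - [:0, 1:])"
        define c where "c = a * (1 - poly h a * poly H a) / of_nat n"
        have FM: "poly F s = - (poly k (\<delta> * poly R s) ^ (q - 2) * poly (linq q H) (poly f (\<delta> * poly R s))) + c * (\<delta> * poly R s)"
          if "s \<in> subfq q" for s
        proof -
          have "poly F s = poly (pcompose (- (k ^ (q - 2) * pcompose (linq q H) f)
                                   + smult (a * (1 - poly h a * poly H a) / of_nat n) [:0, 1:])
                                  (smult \<delta> R)) s"
            using HF that unfolding subfq_def by (intro pcong_eval[OF ctx]) auto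
          then show ?thesis unfolding c_def by (simp add: poly_pcompose)
        qed
        obtain w where w: "h * H - 1 = ?G * w" using HF gaeq unfolding pcong_def by (auto elim!: dvdE)
        have HH: "poly (linq q H) (poly (linq q h) x) = x + poly w a * poly (linq q (gp a n)) x" for x
        proof -
          have "poly (linq q H) (poly (linq q h) x) = poly (linq q (H * h)) x"
            by (simp add: linq_mult[OF q0 frob hc] q1)
          also have "H * h = 1 + w * ?G" using w by (simp add: algebra_simps)
          also have "poly (linq q (1 + w * ?G)) x = x + poly w a * poly (linq q (gp a n)) x"
            by (simp add: linq_add linq_1 linq_mult[OF q0 frob G_coeff[OF ctx]] q1
                          linq_eig[OF q0 frob aq Lg_q[OF ctx]])
          finally show ?thesis .
        qed
        have cc: "c + poly w a = 0"
        proof -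
          have "poly h a * poly H a - 1 = of_nat n * a ^ (n - 1) * poly w a"
            using arg_cong[OF w, of "\<lambda>u. poly u a"] by (simp add: gp_poly)
          then have "c = - (a * a ^ (n - 1)) * poly w a"
            unfolding c_def using n0 by (simp add: field_simps)
          also have "a * a ^ (n - 1) = 1" using assms(6) assms(3) by (cases n) simp_all
          finally show ?thesis by simp
        qed
        have first: "\<forall>x. P0 R F H (P x) = x"
          unfolding P0d Pd using P0_gen[OF ctx R FM HH cc] by simp
        show "(\<forall>x. P0 R F H (P x) = x) \<and> (\<forall>x. P (P0 R F H x) = x)"
          using first second[OF first] by blast
      qed
      show ?thesis by (rule conjI[OF A B])
    qed
    show "(p dvd n \<longrightarrow>
              (\<exists>!H. (\<forall>i. coeff H i \<in> subfq q) \<and> degree H + 1 \<le> n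
                     \<and> pcong (h * H) 1 (monom 1 n - 1)) \<and>
              (\<forall>H F. (\<forall>i. coeff H i \<in> subfq q) \<and> degree H + 1 \<le> n
                     \<and> pcong (h * H) 1 (monom 1 n - 1)
                     \<and> pcong F (- (pcompose k (smult \<delta> R) ^ (q - 2)
                                   * pcompose (linq q H) (pcompose f (smult \<delta> R))))
                             (monom 1 q - [:0, 1:])
                     \<longrightarrow> (\<forall>x. P0 R F H (P x) = x) \<and> (\<forall>x. P (P0 R F H x) = x))) \<and>
           (\<not> p dvd n \<longrightarrow>
              (\<exists>!H. (\<forall>i. coeff H i \<in> subfq q) \<and> (H = 0 \<or> degree H + 2 \<le> n)
                     \<and> pcong (h * H) 1 (ga n a)) \<and>
              (\<forall>H F. (\<forall>i. coeff H i \<in> subfq q) \<and> (H = 0 \<or> degree H + 2 \<le> n)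
                     \<and> pcong (h * H) 1 (ga n a)
                     \<and> pcong F (pcompose (- (k ^ (q - 2) * pcompose (linq q H) f)
                                   + smult (a * (1 - poly h a * poly H a) / of_nat n) [:0, 1:])
                                  (smult \<delta> R))
                             (monom 1 q - [:0, 1:])
                     \<longrightarrow> (\<forall>x. P0 R F H (P x) = x) \<and> (\<forall>x. P (P0 R F H x) = x)))"
      by (rule conjI; rule impI) (erule caseP, erule caseN)
  qed
  qed
qed

end
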